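(* Let $n=2$, let $O_1=\{p\in M: v_1(p)\ge v_2(p)\}$, $O_2=\{q\in M: v_1(q)<v_2(q)\}$, and assume that in the allocation $(O_1,O_2)$ agent 2 strongly envies agent 1. Let $\mathrm{OPT}$ be the maximum social welfare $v_1(A_1)+v_2(A_2)$ over all EF1 allocations $(A_1,A_2)$, and let $\mathrm{OPT}(C_2)$ be the maximum social welfare over all allocations in which agent 2 does not strongly envy agent 1. Then $\mathrm{OPT}=\mathrm{OPT}(C_2)$.
   Context: Two agents with additive valuations $v_1,v_2:2^M\to\mathbb{R}_{\ge0}$ over items $M=[m]$; an allocation $(A_1,A_2)$ is a partition of $M$. Agent $i$ strongly envies agent $j$ if $A_j\ne\emptyset$ and $v_i(A_i)<v_i(A_j\setminus\{g\})$ for every $g\in A_j$. An allocation is EF1 if neither agent strongly envies the other (an agent never strongly envies an empty bundle). *)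

theory Defs
  imports Complex_Main
begin

text \<open>Additive valuations are given by
  per-item values u1 u2 :: 'a => real (nonnegative); the value of a bundle S
  is sum u S.\<close>

definition strongly_envies :: "('a \<Rightarrow> real) \<Rightarrow> 'a set \<Rightarrow> 'a set \<Rightarrow> bool" where
  "strongly_envies u Ai Aj \<longleftrightarrow> Aj \<noteq> {} \<and> (\<forall>g\<in>Aj. sum u Ai < sum u (Aj - {g}))"

definition allocations :: "'a set \<Rightarrow> ('a set \<times> 'a set) set" where
  "allocations M = {(A1, A2). A1 \<union> A2 = M \<and> A1 \<inter> A2 = {}}"

definition EF1 :: "('a \<Rightarrow> real) \<Rightarrow> ('a \<Rightarrow> real) \<Rightarrow> 'a set \<times> 'a set \<Rightarrow> bool" where
  "EF1 u1 u2 A \<longleftrightarrow> \<not> strongly_envies u1 (fst A) (snd A) \<and> \<not> strongly_envies u2 (snd A) (fst A)"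

definition welfare :: "('a \<Rightarrow> real) \<Rightarrow> ('a \<Rightarrow> real) \<Rightarrow> 'a set \<times> 'a set \<Rightarrow> real" where
  "welfare u1 u2 A = sum u1 (fst A) + sum u2 (snd A)"

definition OPT :: "'a set \<Rightarrow> ('a \<Rightarrow> real) \<Rightarrow> ('a \<Rightarrow> real) \<Rightarrow> real" where
  "OPT M u1 u2 = Max (welfare u1 u2 ` {A \<in> allocations M. EF1 u1 u2 A})"

definition OPT_C2 :: "'a set \<Rightarrow> ('a \<Rightarrow> real) \<Rightarrow> ('a \<Rightarrow> real) \<Rightarrow> real" where
  "OPT_C2 M u1 u2 = Max (welfare u1 u2 ` {A \<in> allocations M. \<not> strongly_envies u2 (snd A) (fst A)})"

end

theory Submission
  imports Defs
begin

lemma sum_sub_le: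
  fixes v :: "'a \<Rightarrow> real"
  assumes "finite B" "A \<subseteq> B" "\<forall>p\<in>B. v p \<ge> 0"
  shows "sum v A \<le> sum v B"
  using assms by (intro sum_mono2) auto

lemma S_nonempty:
  fixes M :: "'a set" and v1 v2 :: "'a \<Rightarrow> real"
  assumes fin: "finite M"
    and n2: "\<forall>p\<in>M. v2 p \<ge> 0"
    and o1: "O1 = {p\<in>M. v1 p \<ge> v2 p}" and o2: "O2 = {q\<in>M. v1 q < v2 q}"
    and se: "strongly_envies v2 O2 O1"
    and part: "A1 \<union> A2 = M" "A1 \<inter> A2 = {}"
    and c2: "\<not> strongly_envies v2 A2 A1"
  shows "\<exists>g\<in>A2. v1 g \<ge> v2 g"
proof (rule ccontr)
  assume nt: "\<not> (\<exists>g\<in>A2. v1 g \<ge> v2 g)"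
  hence A2O2: "A2 \<subseteq> O2" using part o2 by auto
  have O1A1: "O1 \<subseteq> A1" using part o1 nt by auto
  from se have ne: "O1 \<noteq> {}" and lt: "\<forall>g\<in>O1. sum v2 O2 < sum v2 (O1 - {g})"
    unfolding strongly_envies_def by auto
  then obtain g0 where g0: "g0 \<in> O1" by auto
  have fA1: "finite A1" using fin part by auto
  have a2le: "sum v2 A2 \<le> sum v2 O2"
    using sum_sub_le[of O2 A2 v2] A2O2 fin n2 o2 by auto
  have "strongly_envies v2 A2 A1"
    unfolding strongly_envies_def
  proof (intro conjI ballI)
    show "A1 \<noteq> {}" using ne O1A1 by auto
  next
    fix g assume g: "g \<in> A1"
    show "sum v2 A2 < sum v2 (A1 - {g})"
    proof (cases "g \<in> O1")
      case True
      have "sum v2 (O1 - {g}) \<le> sum v2 (A1 - {g})"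
        using sum_sub_le[of "A1 - {g}" "O1 - {g}" v2] fA1 O1A1 n2 part by auto
      then show ?thesis using lt True a2le by force
    next
      case False
      have "sum v2 (O1 - {g0}) \<le> sum v2 (A1 - {g})"
        using sum_sub_le[of "A1 - {g}" "O1 - {g0}" v2] fA1 O1A1 n2 part False by auto
      then show ?thesis using lt g0 a2le by force
    qed
  qed
  with c2 show False by simp
qed

lemma core:
  fixes M :: "'a set" and v1 v2 :: "'a \<Rightarrow> real"
  assumes fin: "finite M"
    and n1: "\<forall>p\<in>M. v1 p \<ge> 0" and n2: "\<forall>p\<in>M. v2 p \<ge> 0"
    and o1: "O1 = {p\<in>M. v1 p \<ge> v2 p}" and o2: "O2 = {q\<in>M. v1 q < v2 q}"
    and se: "strongly_envies v2 O2 O1"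
    and part: "A1 \<union> A2 = M" "A1 \<inter> A2 = {}"
    and c2: "\<not> strongly_envies v2 A2 A1"
    and e1: "strongly_envies v1 A1 A2"
  shows "(\<exists>g\<in>A2. v1 g \<ge> v2 g \<and> \<not> strongly_envies v2 (A2 - {g}) (insert g A1))
     \<or> (\<not> strongly_envies v2 A1 A2 \<and> sum v1 A1 + sum v2 A2 < sum v1 A2 + sum v2 A1)"
proof -
  obtain g where g: "g \<in> A2" "v1 g \<ge> v2 g"
    using S_nonempty[OF fin n2 o1 o2 se part c2] by auto
  show ?thesis
  proof (cases "strongly_envies v2 (A2 - {g}) (insert g A1)")
    case False then show ?thesis using g by auto
  next
    case True
    have fA2: "finite A2" using fin part by auto
    have "sum v2 (A2 - {g}) < sum v2 (insert g A1 - {g})"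
      using True unfolding strongly_envies_def by auto
    moreover have "insert g A1 - {g} = A1" using g part by auto
    moreover have "sum v2 (A2 - {g}) = sum v2 A2 - v2 g" using g fA2 by (simp add: sum_diff1)
    ultimately have h2: "sum v2 A2 - v2 g < sum v2 A1" by simp
    have "sum v1 A1 < sum v1 (A2 - {g})" using e1 g unfolding strongly_envies_def by auto
    moreover have "sum v1 (A2 - {g}) = sum v1 A2 - v1 g" using g fA2 by (simp add: sum_diff1)
    ultimately have h1: "sum v1 A1 < sum v1 A2 - v1 g" by simp
    have "\<not> strongly_envies v2 A1 A2"
      unfolding strongly_envies_def using g h2 \<open>sum v2 (A2 - {g}) = sum v2 A2 - v2 g\<close> by force
    moreover have "sum v1 A1 + sum v2 A2 < sum v1 A2 + sum v2 A1" using h1 h2 g by linarith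
    ultimately show ?thesis by simp
  qed
qed

theorem lemma1:
  fixes M :: "'a set" and v1 v2 :: "'a \<Rightarrow> real"
  assumes "finite M"
    and "\<forall>p\<in>M. v1 p \<ge> 0" and "\<forall>p\<in>M. v2 p \<ge> 0"
    and "O1 = {p\<in>M. v1 p \<ge> v2 p}" and "O2 = {q\<in>M. v1 q < v2 q}"
    and "strongly_envies v2 O2 O1"
  shows "OPT M v1 v2 = OPT_C2 M v1 v2"
proof -
  note fin = assms(1) and n1 = assms(2) and n2 = assms(3)
  define C where "C = {A \<in> allocations M. \<not> strongly_envies v2 (snd A) (fst A)}"
  define E where "E = {A \<in> allocations M. EF1 v1 v2 A}"
  have allfin: "finite (allocations M)"
  proof -
    have "allocations M \<subseteq> Pow M \<times> Pow M" unfolding allocations_def by auto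
    thus ?thesis using fin by (meson finite_Pow_iff finite_SigmaI finite_subset)
  qed
  have finC: "finite C" and finE: "finite E" using allfin unfolding C_def E_def by auto
  have EC: "E \<subseteq> C" unfolding E_def C_def EF1_def by auto
  have "({}, M) \<in> C"
    unfolding C_def allocations_def strongly_envies_def by auto
  hence neC: "C \<noteq> {}" by auto
  define W where "W = Max (welfare v1 v2 ` C)"
  define C' where "C' = {A \<in> C. welfare v1 v2 A = W}"
  have "W \<in> welfare v1 v2 ` C" unfolding W_def using finC neC by auto
  hence neC': "C' \<noteq> {}" unfolding C'_def by auto
  have finC': "finite C'" using finC unfolding C'_def by auto
  define K where "K = Max ((\<lambda>A. card (fst A)) ` C')"
  have "K \<in> (\<lambda>A. card (fst A)) ` C'" unfolding K_def using finC' neC' by auto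
  then obtain A where AC': "A \<in> C'" and AK: "card (fst A) = K" by auto
  obtain A1 A2 where Aeq: "A = (A1, A2)" by (cases A)
  have AC: "A \<in> C" and AW: "welfare v1 v2 A = W" using AC' unfolding C'_def by auto
  have part: "A1 \<union> A2 = M" "A1 \<inter> A2 = {}" and c2: "\<not> strongly_envies v2 A2 A1"
    using AC Aeq unfolding C_def allocations_def by auto
  have maxW: "\<And>B. B \<in> C \<Longrightarrow> welfare v1 v2 B \<le> W" unfolding W_def using finC by auto
  have maxK: "\<And>B. B \<in> C' \<Longrightarrow> card (fst B) \<le> K" unfolding K_def using finC' by auto
  have fA1: "finite A1" using fin part by auto
  have notE1: "\<not> strongly_envies v1 A1 A2"
  proof
    assume e1: "strongly_envies v1 A1 A2"
    from core[OF fin n1 n2 assms(4,5,6) part c2 e1] show False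
    proof
      assume "\<exists>g\<in>A2. v1 g \<ge> v2 g \<and> \<not> strongly_envies v2 (A2 - {g}) (insert g A1)"
      then obtain g where g: "g \<in> A2" "v1 g \<ge> v2 g"
        and c: "\<not> strongly_envies v2 (A2 - {g}) (insert g A1)" by auto
      let ?B = "(insert g A1, A2 - {g})"
      have gn: "g \<notin> A1" using g part by auto
      have BC: "?B \<in> C" unfolding C_def allocations_def using c part g by auto
      have fA2: "finite A2" using fin part by auto
      have "welfare v1 v2 ?B = sum v1 A1 + v1 g + (sum v2 A2 - v2 g)"
        unfolding welfare_def using gn fA1 fA2 g by (simp add: sum_diff1)
      hence "welfare v1 v2 ?B \<ge> welfare v1 v2 A" using g Aeq unfolding welfare_def by simp
      with maxW[OF BC] AW have "welfare v1 v2 ?B = W" by simp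
      hence "?B \<in> C'" using BC unfolding C'_def by auto
      from maxK[OF this] have "card (insert g A1) \<le> K" by simp
      moreover have "card (insert g A1) = K + 1" using gn fA1 AK Aeq by simp
      ultimately show False by simp
    next
      assume h: "\<not> strongly_envies v2 A1 A2 \<and> sum v1 A1 + sum v2 A2 < sum v1 A2 + sum v2 A1"
      have BC: "(A2, A1) \<in> C" unfolding C_def allocations_def using h part by auto
      from maxW[OF BC] AW Aeq h show False unfolding welfare_def by simp
    qed
  qed
  have AE: "A \<in> E" unfolding E_def EF1_def using AC notE1 Aeq unfolding C_def by auto
  have "OPT_C2 M v1 v2 = W" unfolding OPT_C2_def W_def C_def by simp
  have "OPT M v1 v2 = Max (welfare v1 v2 ` E)" unfolding OPT_def E_def by simp
  also have "\<dots> = W"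
  proof (rule antisym)
    show "Max (welfare v1 v2 ` E) \<le> W"
      using finE AE maxW EC by (subst Max_le_iff) auto
    show "W \<le> Max (welfare v1 v2 ` E)"
      using finE AE AW by (intro Max_ge) auto
  qed
  finally show ?thesis using \<open>OPT_C2 M v1 v2 = W\<close> by simp
qed

end
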